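(* Let $S$ be a SAT problem on $n$ variables with clauses represented by $z_1,\dots,z_m$, and for each $j$ let $\mathcal T'_j=\{\lambda\in O(1)^n : M(z_j)\subseteq(1,\lambda)\}$. Then $S$ is unsatisfiable if and only if $\bigcup_{j=1}^m\mathcal T'_j=O(1)^n$.
   Context: $\mathbb{R}^{n,n}$ has orthonormal basis $e_1,\dots,e_{2n}$ with $e_i\cdot e_j=\delta_{ij}(-1)^{i+1}$, identified with $\mathbb{R}^n\times\mathbb{R}^n$ via $\sum_i(x_ie_{2i-1}+y_ie_{2i})\mapsto(x,y)$. Witt basis: $p_i=\tfrac12(e_{2i-1}+e_{2i})$, $q_i=\tfrac12(e_{2i-1}-e_{2i})$. For $t\in O(n)$, $(1,t):=\{(x,t(x)):x\in\mathbb{R}^n\}$; in particular $P=(1,1)=\mathrm{span}\{p_1,\dots,p_n\}$ and $(1,\lambda)$ is the image of $P$ under the isometry $\mathrm{id}\times\lambda$. $O(1)^n$ is the group of diagonal $n\times n$ matrices with entries $\pm1$. SAT encoding in the Clifford algebra $Cl(\mathbb{R}^{n,n})$: $\rho_i\mapsto q_ip_i$, $\bar\rho_i\mapsto p_iq_i$; a clause $(\ell_{j_1}\lor\dots\lor\ell_{j_k})$ on distinct variables is represented by $z=\bar\ell_{j_1}\cdots\bar\ell_{j_k}$ (product of encodings of negated literals); $M(z)$ is the span of the first vectors of the factors of $z$ (e.g. $M(q_1p_1\,p_2q_2)=\mathrm{span}\{q_1,p_2\}$). *)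

theory Defs
  imports "HOL-Analysis.Analysis"
begin

text \<open>R^{n,n} identified with R^n x R^n: the vector sum_i (x_i e_{2i-1} + y_i e_{2i}) is (x,y).
  The variable index set is the finite type 'n.\<close>

type_synonym 'n rnn = "(real^'n) \<times> (real^'n)"

text \<open>Witt basis: p_i = (e_{2i-1}+e_{2i})/2, q_i = (e_{2i-1}-e_{2i})/2.\<close>
definition pvec :: "'n::finite \<Rightarrow> 'n rnn" where
  "pvec i = ((1/2) *\<^sub>R axis i 1, (1/2) *\<^sub>R axis i 1)"

definition qvec :: "'n::finite \<Rightarrow> 'n rnn" where
  "qvec i = ((1/2) *\<^sub>R axis i 1, -((1/2) *\<^sub>R axis i 1))"

definition O1n :: "(real^'n^'n::finite) set" where
  "O1n = {l. (\<forall>i j. i \<noteq> j \<longrightarrow> l$i$j = 0) \<and> (\<forall>i. l$i$i = 1 \<or> l$i$i = -1)}"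

definition graph_space :: "real^'n^'n \<Rightarrow> 'n::finite rnn set" where
  "graph_space t = {(x, t *v x) | x. True}"

text \<open>Literals: (i, True) is the positive literal rho_i, (i, False) is bar rho_i.\<close>
type_synonym 'n literal = "'n \<times> bool"

definition neg_lit :: "'n literal \<Rightarrow> 'n literal" where
  "neg_lit l = (fst l, \<not> snd l)"

text \<open>Encoding of a literal as a Clifford product of two vectors, recorded as the
  ordered pair of factors: rho_i -> q_i p_i, bar rho_i -> p_i q_i.\<close>
definition enc_lit :: "'n::finite literal \<Rightarrow> 'n rnn \<times> 'n rnn" where
  "enc_lit l = (if snd l then (qvec (fst l), pvec (fst l)) else (pvec (fst l), qvec (fst l)))"

text \<open>A clause (l_1 or ... or l_k) is represented by z = bar l_1 ... bar l_k,
  recorded as the list of its two-vector factors.\<close>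
definition clause_rep :: "'n::finite literal list \<Rightarrow> ('n rnn \<times> 'n rnn) list" where
  "clause_rep c = map (enc_lit \<circ> neg_lit) c"

definition Mspace :: "('n::finite rnn \<times> 'n rnn) list \<Rightarrow> 'n rnn set" where
  "Mspace z = span (fst ` set z)"

definition Tprime :: "('n::finite rnn \<times> 'n rnn) list \<Rightarrow> (real^'n^'n) set" where
  "Tprime z = {l \<in> O1n. Mspace z \<subseteq> graph_space l}"

definition lit_true :: "('n \<Rightarrow> bool) \<Rightarrow> 'n literal \<Rightarrow> bool" where
  "lit_true a l = (a (fst l) = snd l)"

definition satisfiable :: "'n literal list list \<Rightarrow> bool" where
  "satisfiable S = (\<exists>a. \<forall>c \<in> set S. \<exists>l \<in> set c. lit_true a l)"

end

theory Submission
  imports Defs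
begin

lemma graph_subspace: "subspace (graph_space (l::real^'n^'n::finite))"
  unfolding subspace_def graph_space_def
proof (intro conjI allI impI ballI)
  show "0 \<in> {(x, l *v x) |x. True}" by (rule CollectI, rule exI[of _ 0]) (simp add: zero_prod_def)
next
  fix c :: real and v assume "v \<in> {(x, l *v x) |x. True}"
  then obtain x where "v = (x, l *v x)" by blast
  then show "c *\<^sub>R v \<in> {(x, l *v x) |x. True}"
    by (auto simp: matrix_vector_mult_scaleR intro!: exI[of _ "c *\<^sub>R x"])
next
  fix v w assume "v \<in> {(x, l *v x) |x. True}" "w \<in> {(x, l *v x) |x. True}"
  then obtain x y where "v = (x, l *v x)" "w = (y, l *v y)" by blast
  then show "v + w \<in> {(x, l *v x) |x. True}"
    by (auto simp: matrix_vector_right_distrib intro!: exI[of _ "x + y"])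
qed

lemma diag_axis:
  assumes "l \<in> O1n"
  shows "l *v axis i (1::real) = (l$i$i) *\<^sub>R axis i 1"
proof -
  have "(l *v axis i 1)$k = ((l$i$i) *\<^sub>R axis i 1)$k" for k
  proof -
    have "(l *v axis i 1)$k = (\<Sum>j\<in>UNIV. l$k$j * (if j = i then 1 else 0))"
      by (simp add: matrix_vector_mult_def axis_def)
    also have "\<dots> = l$k$i" by (simp add: if_distrib sum.delta cong: if_cong)
    finally show ?thesis using assms by (auto simp: O1n_def axis_def)
  qed
  then show ?thesis by (simp add: vec_eq_iff)
qed

lemma axis_ne: "axis i (1::real) \<noteq> 0"
  by (metis axis_nth zero_index zero_neq_one)

lemma pvec_graph:
  assumes "l \<in> O1n"
  shows "pvec i \<in> graph_space l \<longleftrightarrow> l$i$i = 1"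
proof -
  have "pvec i \<in> graph_space l \<longleftrightarrow> (1/2) *\<^sub>R axis i (1::real) = (1/2) *\<^sub>R ((l$i$i) *\<^sub>R axis i 1)"
    by (auto simp: pvec_def graph_space_def matrix_vector_mult_scaleR diag_axis[OF assms])
  also have "\<dots> \<longleftrightarrow> axis i (1::real) = (l$i$i) *\<^sub>R axis i 1"
    by (subst scaleR_cancel_left) simp
  also have "\<dots> \<longleftrightarrow> l$i$i = 1"
  proof
    assume "axis i (1::real) = (l$i$i) *\<^sub>R axis i 1"
    then have "1 *\<^sub>R axis i (1::real) = (l$i$i) *\<^sub>R axis i 1" by simp
    then show "l$i$i = 1" using scaleR_cancel_right axis_ne by metis
  qed simp
  finally show ?thesis .
qed

lemma qvec_graph:
  assumes "l \<in> O1n"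
  shows "qvec i \<in> graph_space l \<longleftrightarrow> l$i$i = -1"
proof -
  have "qvec i \<in> graph_space l \<longleftrightarrow> -((1/2) *\<^sub>R axis i (1::real)) = (1/2) *\<^sub>R ((l$i$i) *\<^sub>R axis i 1)"
    by (auto simp: qvec_def graph_space_def matrix_vector_mult_scaleR diag_axis[OF assms])
  also have "\<dots> \<longleftrightarrow> (-1) *\<^sub>R axis i (1::real) = (l$i$i) *\<^sub>R axis i 1"
  proof -
    have "-((1/2) *\<^sub>R axis i (1::real)) = (1/2) *\<^sub>R ((-1) *\<^sub>R axis i 1)" by simp
    then show ?thesis by (simp only: scaleR_cancel_left) simp
  qed
  also have "\<dots> \<longleftrightarrow> l$i$i = -1"
    using scaleR_cancel_right[of "-1" "axis i (1::real)" "l$i$i"] axis_ne by auto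
  finally show ?thesis .
qed

lemma lit_graph:
  fixes l :: "real^'n^'n::finite" and x :: "'n literal"
  assumes lO: "l \<in> O1n"
  shows "fst (enc_lit (neg_lit x)) \<in> graph_space l \<longleftrightarrow> \<not> lit_true (\<lambda>i. l$i$i = -1) x"
proof -
  obtain i b where x: "x = (i, b)" by (cases x)
  have d: "l$i$i = 1 \<or> l$i$i = -1" using lO by (simp add: O1n_def)
  show ?thesis
  proof (cases b)
    case True
    then have "fst (enc_lit (neg_lit x)) = pvec i" by (simp add: x enc_lit_def neg_lit_def)
    then show ?thesis using pvec_graph[OF lO, of i] d True by (auto simp: x lit_true_def)
  next
    case False
    then have "fst (enc_lit (neg_lit x)) = qvec i" by (simp add: x enc_lit_def neg_lit_def)
    then show ?thesis using qvec_graph[OF lO, of i] d False by (auto simp: x lit_true_def)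
  qed
qed

lemma Tprime_iff:
  fixes l :: "real^'n^'n::finite"
  shows
  "l \<in> Tprime (clause_rep c) \<longleftrightarrow> l \<in> O1n \<and> (\<forall>x \<in> set c. \<not> lit_true (\<lambda>i. l$i$i = -1) x)"
proof (cases "l \<in> O1n")
  case True
  have "Mspace (clause_rep c) \<subseteq> graph_space l \<longleftrightarrow> fst ` set (clause_rep c) \<subseteq> graph_space l"
    unfolding Mspace_def
    by (meson graph_subspace span_minimal span_superset subset_trans)
  also have "\<dots> \<longleftrightarrow> (\<forall>x \<in> set c. fst (enc_lit (neg_lit x)) \<in> graph_space l)"
    by (simp add: clause_rep_def image_subset_iff)
  also have "\<dots> \<longleftrightarrow> (\<forall>x \<in> set c. \<not> lit_true (\<lambda>i. l$i$i = -1) x)"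
    using lit_graph[OF True] by blast
  finally show ?thesis using True by (simp add: Tprime_def)
qed (simp add: Tprime_def)

theorem proposition5:
  fixes S :: "('n::finite) literal list list"
  assumes "\<forall>c \<in> set S. distinct (map fst c)"
  shows "\<not> satisfiable S \<longleftrightarrow> (\<Union>c \<in> set S. Tprime (clause_rep c)) = O1n"
proof
  assume ns: "\<not> satisfiable S"
  show "(\<Union>c \<in> set S. Tprime (clause_rep c)) = O1n"
  proof
    show "(\<Union>c \<in> set S. Tprime (clause_rep c)) \<subseteq> O1n" by (auto simp: Tprime_def)
  next
    show "O1n \<subseteq> (\<Union>c \<in> set S. Tprime (clause_rep c))"
    proof
      fix l :: "real^'n^'n" assume l: "l \<in> O1n"
      from ns obtain c where "c \<in> set S" "\<forall>x \<in> set c. \<not> lit_true (\<lambda>i. l$i$i = -1) x"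
        unfolding satisfiable_def by blast
      then show "l \<in> (\<Union>c \<in> set S. Tprime (clause_rep c))" using l Tprime_iff by blast
    qed
  qed
next
  assume eq: "(\<Union>c \<in> set S. Tprime (clause_rep c)) = O1n"
  show "\<not> satisfiable S"
  proof
    assume "satisfiable S"
    then obtain a where a: "\<forall>c \<in> set S. \<exists>x \<in> set c. lit_true a x"
      unfolding satisfiable_def by blast
    define l :: "real^'n^'n" where "l = (\<chi> i j. if i = j then (if a i then -1 else 1) else 0)"
    have lO: "l \<in> O1n" by (auto simp: O1n_def l_def)
    have aeq: "(\<lambda>i. l$i$i = -1) = a" by (auto simp: l_def)
    from lO eq obtain c where "c \<in> set S" "l \<in> Tprime (clause_rep c)" by blast
    then have "\<forall>x \<in> set c. \<not> lit_true (\<lambda>i. l$i$i = -1) x" using Tprime_iff[of l c] by blast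
    then have "\<forall>x \<in> set c. \<not> lit_true a x" by (simp only: aeq)
    then show False using a \<open>c \<in> set S\<close> by blast
  qed
qed

end
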